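(* Consider the controlled system $\dot x = f(x)+g(x)u$, $y=h(x)$, with $x\in\mathbb{R}^{d_x}$, $u\in\mathbb{R}^{d_u}$, $y\in\mathbb{R}$, where $f,g,h$ are sufficiently many times differentiable, and let $\mathcal{S}\subset\mathbb{R}^{d_x}$ be open. Suppose that $\mathbf{H}_{d_o}$ is an immersion on $\mathcal{S}$ (e.g. the system is strongly differentially observable of order $d_o$ on $\mathcal{S}$), and that for every $i\in\{1,\dots,d_o\}$ and every $x\in\mathcal{S}$ there exist $L>0$ and a neighborhood $N$ of $x$ such that $$|L_gL_f^{i-1}h(x_a)-L_gL_f^{i-1}h(x_b)|\le L\,|\mathbf{H}_i(x_a)-\mathbf{H}_i(x_b)|\qquad\forall(x_a,x_b)\in N^2.$$ Then the system is uniformly infinitesimally observable on $\mathcal{S}$.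
   Context: $L_f$ is the Lie derivative along $f$, $L_g\alpha$ the row vector of Lie derivatives along the columns of $g$; $\mathbf{H}_i(x)=(h(x),L_fh(x),\dots,L_f^{i-1}h(x))$. Strongly differentially observable of order $d_o$ on $\mathcal{S}$: $\mathbf{H}_{d_o}$ is an injective immersion on $\mathcal{S}$. Uniform infinitesimal observability: consider the lifted system $\dot x=f(x)+g(x)u$, $\dot v=\big[\frac{\partial f}{\partial x}(x)+\frac{\partial (g u)}{\partial x}(x)\big]v$, with outputs $y=h(x)$, $w=\frac{\partial h}{\partial x}(x)v$, $v\in\mathbb{R}^{d_x}$, whose solutions are $(X_u(x,t),V_u((x,v),t))$. The system is uniformly infinitesimally observable on $\mathcal{S}$ if for any $(x,v)\in\mathcal{S}\times(\mathbb{R}^{d_x}\setminus\{0\})$, any $T>0$ and any $C^1$ function $u$ on $[0,T)$, there exists $t<T$ with $\frac{\partial h}{\partial x}(X_u(x,t))\,V_u((x,v),t)\ne0$ and $X_u(x,s)\in\mathcal{S}$ for all $s\le t$. *)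

theory Defs
  imports "HOL-Analysis.Analysis"
begin

fun Ck :: "nat \<Rightarrow> ('a::real_normed_vector \<Rightarrow> 'b::real_normed_vector) \<Rightarrow> bool" where
  "Ck 0 \<phi> = continuous_on UNIV \<phi>"
| "Ck (Suc k) \<phi> = ((\<forall>x. \<phi> differentiable (at x)) \<and>
      (\<forall>v. Ck k (\<lambda>x. frechet_derivative \<phi> (at x) v)))"

definition smooth_fun :: "('a::real_normed_vector \<Rightarrow> 'b::real_normed_vector) \<Rightarrow> bool" where
  "smooth_fun \<phi> \<longleftrightarrow> (\<forall>k. Ck k \<phi>)"

definition lie_deriv :: "(real^'n \<Rightarrow> real^'n) \<Rightarrow> (real^'n \<Rightarrow> real) \<Rightarrow> real^'n \<Rightarrow> real" where
  "lie_deriv F \<phi> x = frechet_derivative \<phi> (at x) (F x)"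

definition lie_iter :: "(real^'n \<Rightarrow> real^'n) \<Rightarrow> (real^'n \<Rightarrow> real) \<Rightarrow> nat \<Rightarrow> real^'n \<Rightarrow> real" where
  "lie_iter F \<phi> k = (lie_deriv F ^^ k) \<phi>"

text \<open>The input matrix g(x) is given by its columns g x $ j; g(x) u is the
  combination of the columns.\<close>
definition gmul :: "(real^'n \<Rightarrow> (real^'n)^'m) \<Rightarrow> real^'n \<Rightarrow> real^'m \<Rightarrow> real^'n" where
  "gmul g x w = (\<Sum>j\<in>UNIV. (w $ j) *\<^sub>R (g x $ j))"

definition lie_g :: "(real^'n \<Rightarrow> (real^'n)^'m) \<Rightarrow> (real^'n \<Rightarrow> real) \<Rightarrow> real^'n \<Rightarrow> real^'m" where
  "lie_g g \<phi> x = (\<chi> j. lie_deriv (\<lambda>z. g z $ j) \<phi> x)"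

text \<open>Euclidean distance |H_i(xa) - H_i(xb)| where
  H_i(x) = (h x, L_f h x, ..., L_f^(i-1) h x).\<close>
definition H_dist :: "(real^'n \<Rightarrow> real^'n) \<Rightarrow> (real^'n \<Rightarrow> real) \<Rightarrow> nat \<Rightarrow> real^'n \<Rightarrow> real^'n \<Rightarrow> real" where
  "H_dist F h i xa xb = sqrt (\<Sum>k<i. (lie_iter F h k xa - lie_iter F h k xb)\<^sup>2)"

definition H_immersion_on :: "(real^'n \<Rightarrow> real^'n) \<Rightarrow> (real^'n \<Rightarrow> real) \<Rightarrow> nat \<Rightarrow> (real^'n) set \<Rightarrow> bool" where
  "H_immersion_on F h d S \<longleftrightarrow>
     (\<forall>x\<in>S. (\<forall>k<d. lie_iter F h k differentiable (at x)) \<and>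
        (\<forall>v. (\<forall>k<d. frechet_derivative (lie_iter F h k) (at x) v = 0) \<longrightarrow> v = 0))"

definition C1_on_interval :: "(real \<Rightarrow> real^'m) \<Rightarrow> real \<Rightarrow> bool" where
  "C1_on_interval u T \<longleftrightarrow>
     (\<exists>D. (\<forall>s\<in>{0..<T}. (u has_vector_derivative D s) (at s within {0..<T}))
          \<and> continuous_on {0..<T} D)"

definition lifted_solution ::
  "(real^'n \<Rightarrow> real^'n) \<Rightarrow> (real^'n \<Rightarrow> (real^'n)^'m) \<Rightarrow> (real \<Rightarrow> real^'m) \<Rightarrow> real
   \<Rightarrow> real^'n \<Rightarrow> real^'n \<Rightarrow> (real \<Rightarrow> real^'n) \<Rightarrow> (real \<Rightarrow> real^'n) \<Rightarrow> bool" where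
  "lifted_solution f g u T x v X V \<longleftrightarrow>
     X 0 = x \<and> V 0 = v \<and>
     (\<forall>s\<in>{0..<T}.
        (X has_vector_derivative (f (X s) + gmul g (X s) (u s))) (at s within {0..<T}) \<and>
        (V has_vector_derivative
           (frechet_derivative f (at (X s)) (V s)
            + frechet_derivative (\<lambda>z. gmul g z (u s)) (at (X s)) (V s))) (at s within {0..<T}))"

text \<open>Uniform infinitesimal observability on S. The (unique) solution is
  quantified over every horizon T on which it exists.\<close>
definition unif_inf_observable ::
  "(real^'n \<Rightarrow> real^'n) \<Rightarrow> (real^'n \<Rightarrow> (real^'n)^'m) \<Rightarrow> (real^'n \<Rightarrow> real) \<Rightarrow> (real^'n) set \<Rightarrow> bool" where
  "unif_inf_observable f g h S \<longleftrightarrow>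
     (\<forall>x\<in>S. \<forall>v. v \<noteq> 0 \<longrightarrow> (\<forall>T>0. \<forall>u X V.
        C1_on_interval u T \<longrightarrow> lifted_solution f g u T x v X V \<longrightarrow>
        (\<exists>t\<in>{0..<T}. frechet_derivative h (at (X t)) (V t) \<noteq> 0 \<and>
                      (\<forall>s\<in>{0..t}. X s \<in> S))))"

end

theory Submission
  imports Defs
begin


lemma fd_works: "f differentiable (at x) \<Longrightarrow> (f has_derivative frechet_derivative f (at x)) (at x)"
  using frechet_derivative_works by blast

lemma Ck_diff: "Ck (Suc k) \<phi> \<Longrightarrow> \<phi> differentiable (at x)" by simp

lemma Ck_mono: "Ck (Suc k) \<phi> \<Longrightarrow> Ck k \<phi>"
proof (induction k arbitrary: \<phi>)
  case 0
  then show ?case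
    by (auto intro!: continuous_at_imp_continuous_on differentiable_imp_continuous_within)
next
  case (Suc k)
  then show ?case by simp
qed

lemma fd_add:
  assumes "\<phi> differentiable (at x)" "\<psi> differentiable (at x)"
  shows "frechet_derivative (\<lambda>x. \<phi> x + \<psi> x) (at x) v = frechet_derivative \<phi> (at x) v + frechet_derivative \<psi> (at x) v"
proof -
  have "((\<lambda>x. \<phi> x + \<psi> x) has_derivative (\<lambda>v. frechet_derivative \<phi> (at x) v + frechet_derivative \<psi> (at x) v)) (at x)"
    using assms by (intro has_derivative_add fd_works)
  from frechet_derivative_at[OF this] show ?thesis by metis
qed

lemma fd_mult:
  fixes \<phi> \<psi> :: "'a::real_normed_vector \<Rightarrow> real"
  assumes "\<phi> differentiable (at x)" "\<psi> differentiable (at x)"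
  shows "frechet_derivative (\<lambda>x. \<phi> x * \<psi> x) (at x) v = \<phi> x * frechet_derivative \<psi> (at x) v + frechet_derivative \<phi> (at x) v * \<psi> x"
proof -
  have "((\<lambda>x. \<phi> x * \<psi> x) has_derivative (\<lambda>v. \<phi> x * frechet_derivative \<psi> (at x) v + frechet_derivative \<phi> (at x) v * \<psi> x)) (at x)"
    using assms by (intro has_derivative_mult fd_works)
  from frechet_derivative_at[OF this] show ?thesis by metis
qed

lemma fd_lin:
  assumes "bounded_linear L" "F differentiable (at x)"
  shows "frechet_derivative (\<lambda>x. L (F x)) (at x) v = L (frechet_derivative F (at x) v)"
proof -
  have "((\<lambda>x. L (F x)) has_derivative (\<lambda>v. L (frechet_derivative F (at x) v))) (at x)"
    using assms bounded_linear.has_derivative fd_works by blast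
  from frechet_derivative_at[OF this] show ?thesis by metis
qed

lemma Ck_const: "Ck k (\<lambda>x. c)"
  by (induction k arbitrary: c) (auto simp: continuous_on_const)

lemma Ck_add: "Ck k \<phi> \<Longrightarrow> Ck k \<psi> \<Longrightarrow> Ck k (\<lambda>x. \<phi> x + \<psi> x)"
proof (induction k arbitrary: \<phi> \<psi>)
  case 0
  then show ?case by (auto intro: continuous_on_add)
next
  case (Suc k)
  have e: "(\<lambda>x. frechet_derivative (\<lambda>x. \<phi> x + \<psi> x) (at x) v) =
     (\<lambda>x. frechet_derivative \<phi> (at x) v + frechet_derivative \<psi> (at x) v)" for v
    using Suc.prems by (auto intro!: fd_add)
  show ?case using Suc by (auto simp: e)
qed

lemma Ck_mult:
  fixes \<phi> \<psi> :: "'a::real_normed_vector \<Rightarrow> real"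
  shows "Ck k \<phi> \<Longrightarrow> Ck k \<psi> \<Longrightarrow> Ck k (\<lambda>x. \<phi> x * \<psi> x)"
proof (induction k arbitrary: \<phi> \<psi>)
  case 0
  then show ?case by (auto intro: continuous_on_mult)
next
  case (Suc k)
  have e: "(\<lambda>x. frechet_derivative (\<lambda>x. \<phi> x * \<psi> x) (at x) v) =
     (\<lambda>x. \<phi> x * frechet_derivative \<psi> (at x) v + frechet_derivative \<phi> (at x) v * \<psi> x)" for v
    using Suc.prems by (auto intro!: fd_mult)
  have "Ck k \<phi>" "Ck k \<psi>" using Suc.prems Ck_mono by blast+
  then show ?case using Suc by (auto simp: e intro!: Ck_add)
qed

lemma Ck_sum:
  fixes \<phi> :: "'i \<Rightarrow> 'a::real_normed_vector \<Rightarrow> real"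
  shows "finite A \<Longrightarrow> (\<And>i. i \<in> A \<Longrightarrow> Ck k (\<phi> i)) \<Longrightarrow> Ck k (\<lambda>x. \<Sum>i\<in>A. \<phi> i x)"
  by (induction A rule: finite_induct) (auto intro: Ck_add Ck_const)

lemma Ck_lin:
  assumes "bounded_linear L"
  shows "Ck k F \<Longrightarrow> Ck k (\<lambda>x. L (F x))"
proof (induction k arbitrary: F)
  case 0
  then show ?case using assms
    by (auto intro: continuous_on_compose2[of UNIV L] linear_continuous_on)
next
  case (Suc k)
  have e: "(\<lambda>x. frechet_derivative (\<lambda>x. L (F x)) (at x) v) =
     (\<lambda>x. L (frechet_derivative F (at x) v))" for v
    using Suc.prems assms by (auto intro!: fd_lin)
  show ?case using Suc assms
    by (auto simp: e intro: differentiable_compose[of L, unfolded o_def] bounded_linear_imp_differentiable)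
qed



lemma lin_expand:
  fixes L :: "real^'n \<Rightarrow> real"
  assumes "linear L"
  shows "L w = (\<Sum>k\<in>UNIV. (w $ k) * L (axis k 1))"
proof -
  have "(\<Sum>k\<in>UNIV. (w $ k) *\<^sub>R axis k 1) = w"
    using basis_expansion[of w] by (simp add: scalar_mult_eq_scaleR)
  then have "L w = L (\<Sum>k\<in>UNIV. (w $ k) *\<^sub>R axis k 1)" by simp
  also have "\<dots> = (\<Sum>k\<in>UNIV. (w $ k) * L (axis k 1))"
    using assms by (simp add: linear_sum linear_scale)
  finally show ?thesis .
qed

lemma fd_expand:
  fixes \<phi> :: "real^'n \<Rightarrow> real"
  assumes "\<phi> differentiable (at x)"
  shows "frechet_derivative \<phi> (at x) w = (\<Sum>k\<in>UNIV. (w $ k) * frechet_derivative \<phi> (at x) (axis k 1))"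
  by (rule lin_expand[OF has_derivative_linear[OF fd_works[OF assms]]])

lemma lie_expand:
  fixes \<phi> :: "real^'n \<Rightarrow> real"
  assumes "\<And>x. \<phi> differentiable (at x)"
  shows "lie_deriv F \<phi> = (\<lambda>x. \<Sum>k\<in>UNIV. (F x $ k) * frechet_derivative \<phi> (at x) (axis k 1))"
  unfolding lie_deriv_def by (rule ext, rule fd_expand[OF assms])

lemma Ck_lie:
  fixes \<phi> :: "real^'n \<Rightarrow> real"
  assumes "Ck k F" "Ck (Suc k) \<phi>"
  shows "Ck k (lie_deriv F \<phi>)"
proof -
  have "Ck k (\<lambda>x. \<Sum>k\<in>UNIV. (F x $ k) * frechet_derivative \<phi> (at x) (axis k 1))"
  proof (rule Ck_sum)
    fix i
    have "Ck k (\<lambda>x. F x $ i)" using assms(1) by (rule Ck_lin[OF bounded_linear_vec_nth])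
    moreover have "Ck k (\<lambda>x. frechet_derivative \<phi> (at x) (axis i 1))" using assms(2) by simp
    ultimately show "Ck k (\<lambda>x. F x $ i * frechet_derivative \<phi> (at x) (axis i 1))" by (rule Ck_mult)
  qed simp
  moreover have "\<And>x. \<phi> differentiable (at x)" using assms(2) by simp
  ultimately show ?thesis using lie_expand[of \<phi> F] by simp
qed

lemma smooth_lie:
  fixes \<phi> :: "real^'n \<Rightarrow> real"
  assumes "smooth_fun F" "smooth_fun \<phi>"
  shows "smooth_fun (lie_deriv F \<phi>)"
  unfolding smooth_fun_def
proof
  fix k show "Ck k (lie_deriv F \<phi>)"
    using assms unfolding smooth_fun_def by (intro Ck_lie) auto
qed

lemma smooth_lie_iter:
  assumes "smooth_fun F" "smooth_fun \<phi>"
  shows "smooth_fun (lie_iter F \<phi> k)"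
proof (induction k)
  case 0
  then show ?case using assms by (simp add: lie_iter_def)
next
  case (Suc k)
  have "lie_iter F \<phi> (Suc k) = lie_deriv F (lie_iter F \<phi> k)" by (simp add: lie_iter_def)
  then show ?case using smooth_lie[OF assms(1) Suc] by simp
qed

lemma smooth_col:
  fixes g :: "real^'n \<Rightarrow> (real^'n)^'m"
  assumes "smooth_fun g"
  shows "smooth_fun (\<lambda>z. g z $ j)"
  unfolding smooth_fun_def
proof
  fix k show "Ck k (\<lambda>z. g z $ j)"
    using assms unfolding smooth_fun_def by (intro Ck_lin[OF bounded_linear_vec_nth]) auto
qed

lemma lie_g_comp: "(\<lambda>x. lie_g g \<phi> x $ j) = lie_deriv (\<lambda>z. g z $ j) \<phi>"
  by (auto simp: lie_g_def)



lemma line_deriv: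
  fixes \<phi> :: "'a::real_normed_vector \<Rightarrow> real"
  assumes "\<phi> differentiable (at (y + r *\<^sub>R a))"
  shows "((\<lambda>r. \<phi> (y + r *\<^sub>R a)) has_real_derivative frechet_derivative \<phi> (at (y + r *\<^sub>R a)) a) (at r)"
proof -
  have l: "((\<lambda>r. y + r *\<^sub>R a) has_derivative (\<lambda>h. h *\<^sub>R a)) (at r)"
    by (auto intro!: derivative_eq_intros)
  have c: "((\<lambda>r. \<phi> (y + r *\<^sub>R a)) has_derivative (\<lambda>h. frechet_derivative \<phi> (at (y + r *\<^sub>R a)) (h *\<^sub>R a))) (at r)"
    using has_derivative_compose[OF l fd_works[OF assms]] .
  have lin: "linear (frechet_derivative \<phi> (at (y + r *\<^sub>R a)))"
    using has_derivative_linear[OF fd_works[OF assms]] .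
  have "(\<lambda>h. frechet_derivative \<phi> (at (y + r *\<^sub>R a)) (h *\<^sub>R a)) = (*) (frechet_derivative \<phi> (at (y + r *\<^sub>R a)) a)"
    using linear_scale[OF lin] by (auto simp: mult.commute)
  then show ?thesis using c by (simp add: has_field_derivative_def)
qed

lemma mixed:
  fixes \<phi> :: "'a::real_normed_vector \<Rightarrow> real"
  assumes d1: "\<And>y. \<phi> differentiable (at y)"
    and d2: "\<And>y. (\<lambda>y. frechet_derivative \<phi> (at y) a) differentiable (at y)"
    and t: "t > 0"
  shows "\<exists>\<xi> \<eta>. 0 < \<xi> \<and> \<xi> < t \<and> 0 < \<eta> \<and> \<eta> < t \<and>
    \<phi> (x + t *\<^sub>R a + t *\<^sub>R b) - \<phi> (x + t *\<^sub>R a) - \<phi> (x + t *\<^sub>R b) + \<phi> x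
     = t * t * frechet_derivative (\<lambda>y. frechet_derivative \<phi> (at y) a) (at (x + \<xi> *\<^sub>R a + \<eta> *\<^sub>R b)) b"
proof -
  define P where "P = (\<lambda>y. frechet_derivative \<phi> (at y) a)"
  define g where "g = (\<lambda>r. \<phi> ((x + t *\<^sub>R b) + r *\<^sub>R a) - \<phi> (x + r *\<^sub>R a))"
  have "DERIV g r :> P ((x + t *\<^sub>R b) + r *\<^sub>R a) - P (x + r *\<^sub>R a)" for r
    unfolding g_def P_def by (intro DERIV_diff line_deriv d1)
  from MVT2[OF t this] obtain \<xi> where \<xi>: "0 < \<xi>" "\<xi> < t"
    "g t - g 0 = (t - 0) * (P ((x + t *\<^sub>R b) + \<xi> *\<^sub>R a) - P (x + \<xi> *\<^sub>R a))" by blast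
  define h where "h = (\<lambda>r. P ((x + \<xi> *\<^sub>R a) + r *\<^sub>R b))"
  have "DERIV h r :> frechet_derivative P (at ((x + \<xi> *\<^sub>R a) + r *\<^sub>R b)) b" for r
    unfolding h_def by (intro line_deriv) (simp add: P_def d2)
  from MVT2[OF t this] obtain \<eta> where \<eta>: "0 < \<eta>" "\<eta> < t"
    "h t - h 0 = (t - 0) * frechet_derivative P (at ((x + \<xi> *\<^sub>R a) + \<eta> *\<^sub>R b)) b" by blast
  have e1: "g t - g 0 = \<phi> (x + t *\<^sub>R a + t *\<^sub>R b) - \<phi> (x + t *\<^sub>R a) - \<phi> (x + t *\<^sub>R b) + \<phi> x"
    unfolding g_def by (simp add: algebra_simps)
  have e2: "h t - h 0 = P ((x + t *\<^sub>R b) + \<xi> *\<^sub>R a) - P (x + \<xi> *\<^sub>R a)"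
    unfolding h_def by (simp add: algebra_simps)
  show ?thesis
    using \<xi> \<eta> e1 e2 unfolding P_def by (intro exI[of _ \<xi>] exI[of _ \<eta>]) auto
qed



lemma abs_aux: "\<bar>p - A\<bar> < \<bar>A - B\<bar> / 2 \<Longrightarrow> \<bar>q - B\<bar> < \<bar>A - B\<bar> / 2 \<Longrightarrow> p = q \<Longrightarrow> False"
  for p q A B :: real
proof -
  assume a: "\<bar>p - A\<bar> < \<bar>A - B\<bar> / 2" "\<bar>q - B\<bar> < \<bar>A - B\<bar> / 2" "p = q"
  have "\<bar>A - B\<bar> \<le> \<bar>A - p\<bar> + \<bar>p - B\<bar>" using abs_triangle_ineq4[of "A - p" "B - p"] by (simp add: abs_minus_commute)
  then show False using a by (simp add: abs_minus_commute)
qed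

lemma sym2:
  fixes \<phi> :: "'a::real_normed_vector \<Rightarrow> real"
  assumes "Ck (Suc (Suc 0)) \<phi>"
  shows "frechet_derivative (\<lambda>y. frechet_derivative \<phi> (at y) a) (at x) b
       = frechet_derivative (\<lambda>y. frechet_derivative \<phi> (at y) b) (at x) a"
proof (rule ccontr)
  define Qab where "Qab = (\<lambda>x. frechet_derivative (\<lambda>y. frechet_derivative \<phi> (at y) a) (at x) b)"
  define Qba where "Qba = (\<lambda>x. frechet_derivative (\<lambda>y. frechet_derivative \<phi> (at y) b) (at x) a)"
  assume ne: "\<not> ?thesis"
  then have ne': "Qab x \<noteq> Qba x" unfolding Qab_def Qba_def .
  define e where "e = \<bar>Qab x - Qba x\<bar> / 2"
  have e: "e > 0" using ne' by (simp add: e_def)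
  have d1: "\<And>y. \<phi> differentiable (at y)"
    and d2: "\<And>c y. (\<lambda>y. frechet_derivative \<phi> (at y) c) differentiable (at y)"
    and c2: "\<And>c w. continuous_on UNIV (\<lambda>x. frechet_derivative (\<lambda>y. frechet_derivative \<phi> (at y) c) (at x) w)"
    using assms by auto
  have "continuous_on UNIV Qab" "continuous_on UNIV Qba" unfolding Qab_def Qba_def using c2 by auto
  then have "\<exists>d>0. \<forall>y\<in>UNIV. dist y x < d \<longrightarrow> dist (Qab y) (Qab x) < e"
     "\<exists>d>0. \<forall>y\<in>UNIV. dist y x < d \<longrightarrow> dist (Qba y) (Qba x) < e"
    using e unfolding continuous_on_iff by blast+
  then obtain da db where da: "da > 0" "\<And>y. dist y x < da \<Longrightarrow> dist (Qab y) (Qab x) < e"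
    and db: "db > 0" "\<And>y. dist y x < db \<Longrightarrow> dist (Qba y) (Qba x) < e"
    by blast
  define d where "d = min da db"
  have d: "d > 0" using da db by (simp add: d_def)
  define t where "t = d / (norm a + norm b + 1)"
  have np: "norm a + norm b + 1 > 0" by (simp add: add_nonneg_pos)
  have t: "t > 0" using d np by (simp add: t_def)
  have td: "t * (norm a + norm b) < d"
  proof -
    have "t * (norm a + norm b) < t * (norm a + norm b + 1)" using t by simp
    also have "\<dots> = d" using np by (simp add: t_def)
    finally show ?thesis .
  qed
  have close: "dist (x + \<xi> *\<^sub>R c1 + \<eta> *\<^sub>R c2) x < d"
    if "0 < \<xi>" "\<xi> < t" "0 < \<eta>" "\<eta> < t" "norm c1 + norm c2 = norm a + norm b" for \<xi> \<eta> c1 c2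
  proof -
    have "dist (x + \<xi> *\<^sub>R c1 + \<eta> *\<^sub>R c2) x = norm (\<xi> *\<^sub>R c1 + \<eta> *\<^sub>R c2)"
      by (simp add: dist_norm)
    also have "\<dots> \<le> \<xi> * norm c1 + \<eta> * norm c2"
      using norm_triangle_ineq[of "\<xi> *\<^sub>R c1" "\<eta> *\<^sub>R c2"] that by simp
    also have "\<dots> \<le> t * norm c1 + t * norm c2"
      using that by (intro add_mono mult_right_mono) auto
    also have "\<dots> = t * (norm a + norm b)" using that(5) by (simp add: distrib_left[symmetric])
    also have "\<dots> < d" using td .
    finally show ?thesis .
  qed
  obtain \<xi>1 \<eta>1 where m1: "0 < \<xi>1" "\<xi>1 < t" "0 < \<eta>1" "\<eta>1 < t"
    "\<phi> (x + t *\<^sub>R a + t *\<^sub>R b) - \<phi> (x + t *\<^sub>R a) - \<phi> (x + t *\<^sub>R b) + \<phi> x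
     = t * t * Qab (x + \<xi>1 *\<^sub>R a + \<eta>1 *\<^sub>R b)"
    using mixed[OF d1 d2 t, where a=a and x=x and b=b] unfolding Qab_def by (elim exE conjE) auto
  obtain \<xi>2 \<eta>2 where m2: "0 < \<xi>2" "\<xi>2 < t" "0 < \<eta>2" "\<eta>2 < t"
    "\<phi> (x + t *\<^sub>R b + t *\<^sub>R a) - \<phi> (x + t *\<^sub>R b) - \<phi> (x + t *\<^sub>R a) + \<phi> x
     = t * t * Qba (x + \<xi>2 *\<^sub>R b + \<eta>2 *\<^sub>R a)"
    using mixed[OF d1 d2 t, where a=b and x=x and b=a] unfolding Qba_def by (elim exE conjE) auto
  have "x + t *\<^sub>R b + t *\<^sub>R a = x + t *\<^sub>R a + t *\<^sub>R b" by (simp add: algebra_simps)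
  then have "t * t * Qab (x + \<xi>1 *\<^sub>R a + \<eta>1 *\<^sub>R b) = t * t * Qba (x + \<xi>2 *\<^sub>R b + \<eta>2 *\<^sub>R a)"
    using m1(5) m2(5) by (metis (no_types, lifting) add_diff_eq diff_add_eq diff_diff_eq2 diff_diff_eq)
  then have eq: "Qab (x + \<xi>1 *\<^sub>R a + \<eta>1 *\<^sub>R b) = Qba (x + \<xi>2 *\<^sub>R b + \<eta>2 *\<^sub>R a)"
    using t by simp
  have "dist (x + \<xi>1 *\<^sub>R a + \<eta>1 *\<^sub>R b) x < d" using close m1 by simp
  then have "dist (Qab (x + \<xi>1 *\<^sub>R a + \<eta>1 *\<^sub>R b)) (Qab x) < e" using da d_def by simp
  moreover have "dist (x + \<xi>2 *\<^sub>R b + \<eta>2 *\<^sub>R a) x < d" using close[of \<xi>2 \<eta>2 b a] m2 by simp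
  then have "dist (Qba (x + \<xi>2 *\<^sub>R b + \<eta>2 *\<^sub>R a)) (Qba x) < e" using db d_def by simp
  ultimately show False using eq unfolding e_def dist_real_def by (rule abs_aux)
qed



lemma chain:
  fixes \<phi> :: "real^'n \<Rightarrow> real" and a :: "real^'n \<Rightarrow> real^'n" and X V :: "real \<Rightarrow> real^'n"
  assumes \<phi>2: "Ck (Suc (Suc 0)) \<phi>" and ad: "a differentiable (at (X s))"
    and Xd: "(X has_vector_derivative a (X s)) (at s within I)"
    and Vd: "(V has_vector_derivative frechet_derivative a (at (X s)) (V s)) (at s within I)"
  shows "((\<lambda>t. frechet_derivative \<phi> (at (X t)) (V t)) has_vector_derivative
           frechet_derivative (lie_deriv a \<phi>) (at (X s)) (V s)) (at s within I)"
proof -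
  define p where "p = (\<lambda>k y. frechet_derivative \<phi> (at y) (axis k 1))"
  define x where "x = X s"
  define A where "A = a x"
  define W where "W = V s"
  define W' where "W' = frechet_derivative a (at x) W"
  have d1: "\<And>y. \<phi> differentiable (at y)" using \<phi>2 by simp
  have dp: "\<And>k y. p k differentiable (at y)" using \<phi>2 by (simp add: p_def)
  have lin: "linear (frechet_derivative (p k) (at y))" for k y
    using has_derivative_linear[OF fd_works[OF dp]] .
  have sym: "frechet_derivative (p k) (at y) (axis j 1) = frechet_derivative (p j) (at y) (axis k 1)" for k j y
    unfolding p_def by (rule sym2[OF \<phi>2])
  have wexp: "(\<lambda>t. frechet_derivative \<phi> (at (X t)) (V t)) = (\<lambda>t. \<Sum>k\<in>UNIV. (V t $ k) * p k (X t))"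
    unfolding p_def by (rule ext, rule fd_expand[OF d1])
  have Xh: "(X has_derivative (\<lambda>r. r *\<^sub>R A)) (at s within I)"
    using Xd by (simp add: has_vector_derivative_def A_def x_def)
  have Vh: "(V has_derivative (\<lambda>r. r *\<^sub>R W')) (at s within I)"
    using Vd by (simp add: has_vector_derivative_def W'_def W_def x_def)
  have comp: "((\<lambda>t. p k (X t)) has_derivative (\<lambda>r. frechet_derivative (p k) (at x) (r *\<^sub>R A))) (at s within I)" for k
    using has_derivative_compose[OF Xh fd_works[OF dp]] unfolding x_def .
  have Vk: "((\<lambda>t. V t $ k) has_derivative (\<lambda>r. (r *\<^sub>R W') $ k)) (at s within I)" for k
    using bounded_linear.has_derivative[OF bounded_linear_vec_nth Vh] .
  have D: "((\<lambda>t. \<Sum>k\<in>UNIV. (V t $ k) * p k (X t)) has_derivative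
     (\<lambda>r. \<Sum>k\<in>UNIV. (V s $ k * frechet_derivative (p k) (at x) (r *\<^sub>R A) + (r *\<^sub>R W') $ k * p k (X s)))) (at s within I)"
    by (intro has_derivative_sum has_derivative_mult comp Vk)
  have lexp: "lie_deriv a \<phi> = (\<lambda>y. \<Sum>k\<in>UNIV. (a y $ k) * p k y)"
    unfolding p_def by (rule lie_expand[OF d1])
  have ak: "((\<lambda>y. a y $ k) has_derivative (\<lambda>w. frechet_derivative a (at x) w $ k)) (at x)" for k
    using bounded_linear.has_derivative[OF bounded_linear_vec_nth fd_works[OF ad[folded x_def]]] .
  have RD: "(lie_deriv a \<phi> has_derivative
     (\<lambda>w. \<Sum>k\<in>UNIV. (a x $ k * frechet_derivative (p k) (at x) w + frechet_derivative a (at x) w $ k * p k x))) (at x)"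
    unfolding lexp by (intro has_derivative_sum has_derivative_mult ak fd_works dp)
  have R: "frechet_derivative (lie_deriv a \<phi>) (at x) W =
     (\<Sum>k\<in>UNIV. (A $ k * frechet_derivative (p k) (at x) W + W' $ k * p k x))"
    unfolding frechet_derivative_at[OF RD, symmetric] by (simp add: A_def W'_def)
  have key: "(\<Sum>k\<in>UNIV. W $ k * frechet_derivative (p k) (at x) A)
           = (\<Sum>k\<in>UNIV. A $ k * frechet_derivative (p k) (at x) W)"
  proof -
    have "(\<Sum>k\<in>UNIV. W $ k * frechet_derivative (p k) (at x) A)
        = (\<Sum>k\<in>UNIV. \<Sum>j\<in>UNIV. W $ k * (A $ j * frechet_derivative (p k) (at x) (axis j 1)))"
      by (subst lin_expand[OF lin]) (simp add: sum_distrib_left)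
    also have "\<dots> = (\<Sum>j\<in>UNIV. \<Sum>k\<in>UNIV. W $ k * (A $ j * frechet_derivative (p k) (at x) (axis j 1)))"
      by (rule sum.swap)
    also have "\<dots> = (\<Sum>j\<in>UNIV. \<Sum>k\<in>UNIV. A $ j * (W $ k * frechet_derivative (p j) (at x) (axis k 1)))"
      by (simp add: sym algebra_simps)
    also have "\<dots> = (\<Sum>j\<in>UNIV. A $ j * frechet_derivative (p j) (at x) W)"
      by (subst (2) lin_expand[OF lin]) (simp add: sum_distrib_left)
    finally show ?thesis .
  qed
  have lin2: "frechet_derivative (p k) (at x) (r *\<^sub>R A) = r * frechet_derivative (p k) (at x) A" for k r
    using linear_scale[OF lin] by simp
  have eqf: "(\<lambda>r. \<Sum>k\<in>UNIV. (V s $ k * frechet_derivative (p k) (at x) (r *\<^sub>R A) + (r *\<^sub>R W') $ k * p k (X s)))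
      = (\<lambda>r. r *\<^sub>R frechet_derivative (lie_deriv a \<phi>) (at x) W)"
  proof
    fix r
    have "(\<Sum>k\<in>UNIV. (V s $ k * frechet_derivative (p k) (at x) (r *\<^sub>R A) + (r *\<^sub>R W') $ k * p k (X s)))
       = r * ((\<Sum>k\<in>UNIV. W $ k * frechet_derivative (p k) (at x) A) + (\<Sum>k\<in>UNIV. W' $ k * p k x))"
      unfolding x_def[symmetric] W_def[symmetric] by (simp add: lin2 sum.distrib sum_distrib_left algebra_simps)
    also have "\<dots> = r * frechet_derivative (lie_deriv a \<phi>) (at x) W"
      by (simp add: key R sum.distrib)
    finally show "(\<Sum>k\<in>UNIV. (V s $ k * frechet_derivative (p k) (at x) (r *\<^sub>R A) + (r *\<^sub>R W') $ k * p k (X s)))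
      = r *\<^sub>R frechet_derivative (lie_deriv a \<phi>) (at x) W" by simp
  qed
  show ?thesis
    unfolding has_vector_derivative_def wexp using D unfolding eqf by (simp add: x_def W_def)
qed



lemma lip_zero:
  fixes \<psi> :: "real^'n \<Rightarrow> real^'m" and \<Phi> :: "nat \<Rightarrow> real^'n \<Rightarrow> real"
  assumes N: "open N" "y \<in> N"
    and lip: "\<forall>xa\<in>N. \<forall>xb\<in>N. norm (\<psi> xa - \<psi> xb) \<le> L * sqrt (\<Sum>k<i. (\<Phi> k xa - \<Phi> k xb)\<^sup>2)"
    and d\<Phi>: "\<forall>k<i. \<Phi> k differentiable (at y)"
    and z: "\<forall>k<i. frechet_derivative (\<Phi> k) (at y) v = 0"
    and d\<psi>: "(\<lambda>z. \<psi> z $ j) differentiable (at y)"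
  shows "frechet_derivative (\<lambda>z. \<psi> z $ j) (at y) v = 0"
proof -
  define Dj where "Dj = frechet_derivative (\<lambda>z. \<psi> z $ j) (at y) v"
  have lim: "((\<lambda>r. (\<phi> (y + r *\<^sub>R v) - \<phi> y) / r) \<longlongrightarrow> frechet_derivative \<phi> (at y) v) (at_right 0)"
    if "\<phi> differentiable (at y)" for \<phi> :: "real^'n \<Rightarrow> real"
  proof -
    have "\<phi> differentiable (at (y + 0 *\<^sub>R v))" using that by simp
    from line_deriv[OF this] have "((\<lambda>r. \<phi> (y + r *\<^sub>R v)) has_real_derivative frechet_derivative \<phi> (at y) v) (at 0)"
      by simp
    then have "((\<lambda>r. (\<phi> (y + r *\<^sub>R v) - \<phi> (y + 0 *\<^sub>R v)) / (r - 0)) \<longlongrightarrow> frechet_derivative \<phi> (at y) v) (at 0)"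
      unfolding has_field_derivative_iff .
    then have "((\<lambda>r. (\<phi> (y + r *\<^sub>R v) - \<phi> y) / r) \<longlongrightarrow> frechet_derivative \<phi> (at y) v) (at 0)"
      by simp
    then show ?thesis by (rule tendsto_mono[OF at_le[OF subset_UNIV]])
  qed
  have l1: "((\<lambda>r. \<bar>(\<psi> (y + r *\<^sub>R v) $ j - \<psi> y $ j) / r\<bar>) \<longlongrightarrow> \<bar>Dj\<bar>) (at_right 0)"
    unfolding Dj_def by (intro tendsto_rabs lim[OF d\<psi>])
  have l2: "((\<lambda>r. L * sqrt (\<Sum>k<i. ((\<Phi> k (y + r *\<^sub>R v) - \<Phi> k y) / r)\<^sup>2)) \<longlongrightarrow> L * sqrt (\<Sum>k<i. (frechet_derivative (\<Phi> k) (at y) v)\<^sup>2)) (at_right 0)"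
    using d\<Phi> by (intro tendsto_intros lim) auto
  have zero: "L * sqrt (\<Sum>k<i. (frechet_derivative (\<Phi> k) (at y) v)\<^sup>2) = 0"
    using z by simp
  have ev1: "eventually (\<lambda>r. y + r *\<^sub>R v \<in> N) (at_right 0)"
  proof -
    have "((\<lambda>r. y + r *\<^sub>R v) \<longlongrightarrow> y + 0 *\<^sub>R v) (at_right (0::real))"
      by (intro tendsto_intros)
    then show ?thesis using topological_tendstoD[of _ "y + 0 *\<^sub>R v" _ N] N by simp
  qed
  have ev2: "eventually (\<lambda>r::real. r > 0) (at_right 0)"
    by (simp add: eventually_at_right_less)
  have ev: "eventually (\<lambda>r. \<bar>(\<psi> (y + r *\<^sub>R v) $ j - \<psi> y $ j) / r\<bar> \<le>
      L * sqrt (\<Sum>k<i. ((\<Phi> k (y + r *\<^sub>R v) - \<Phi> k y) / r)\<^sup>2)) (at_right 0)"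
    using ev1 ev2
  proof eventually_elim
    case (elim r)
    have "\<bar>(\<psi> (y + r *\<^sub>R v) $ j - \<psi> y $ j) / r\<bar> = \<bar>(\<psi> (y + r *\<^sub>R v) - \<psi> y) $ j\<bar> / r"
      using elim by simp
    also have "\<dots> \<le> norm (\<psi> (y + r *\<^sub>R v) - \<psi> y) / r"
      using elim by (intro divide_right_mono component_le_norm_cart) auto
    also have "\<dots> \<le> L * sqrt (\<Sum>k<i. (\<Phi> k (y + r *\<^sub>R v) - \<Phi> k y)\<^sup>2) / r"
      using elim lip N by (intro divide_right_mono) auto
    also have "\<dots> = L * sqrt (\<Sum>k<i. ((\<Phi> k (y + r *\<^sub>R v) - \<Phi> k y) / r)\<^sup>2)"
    proof -
      have "(\<Sum>k<i. ((\<Phi> k (y + r *\<^sub>R v) - \<Phi> k y) / r)\<^sup>2) = (\<Sum>k<i. (\<Phi> k (y + r *\<^sub>R v) - \<Phi> k y)\<^sup>2) / r\<^sup>2"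
        by (simp add: power_divide sum_divide_distrib)
      then have "sqrt (\<Sum>k<i. ((\<Phi> k (y + r *\<^sub>R v) - \<Phi> k y) / r)\<^sup>2) = sqrt (\<Sum>k<i. (\<Phi> k (y + r *\<^sub>R v) - \<Phi> k y)\<^sup>2) / r"
        using elim by (simp add: real_sqrt_divide)
      then show ?thesis by simp
    qed
    finally show ?case .
  qed
  have "\<bar>Dj\<bar> \<le> 0"
    using tendsto_le[OF trivial_limit_at_right_real l2 l1 ev] zero by simp
  then show ?thesis unfolding Dj_def by simp
qed



lemma gmul_diff:
  fixes g :: "real^'n \<Rightarrow> (real^'n)^'m"
  assumes "\<And>j y. (\<lambda>z. g z $ j) differentiable (at y)"
  shows "(\<lambda>z. gmul g z U) differentiable (at y)"
  unfolding gmul_def using assms by (intro differentiable_sum differentiable_scaleR differentiable_const) auto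

lemma not_bot_Ico: "t \<in> {0..<\<tau>} \<Longrightarrow> at t within {0..<\<tau>} \<noteq> bot"
  for t \<tau> :: real
proof -
  assume t: "t \<in> {0..<\<tau>}"
  have "t islimpt {0..<\<tau>}"
    unfolding islimpt_approachable_real
  proof (intro allI impI)
    fix e :: real assume e: "e > 0"
    define x' where "x' = t + min e (\<tau> - t) / 2"
    have "x' \<in> {0..<\<tau>}" "x' \<noteq> t" "\<bar>x' - t\<bar> < e" using t e by (auto simp: x'_def min_def field_simps)
    then show "\<exists>s\<in>{0..<\<tau>}. s \<noteq> t \<and> \<bar>s - t\<bar> < e" by blast
  qed
  then show ?thesis using trivial_limit_within by blast
qed

theorem proposition5:
  fixes f :: "real^'n::finite \<Rightarrow> real^'n"
    and g :: "real^'n \<Rightarrow> (real^'n)^'m::finite"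
    and h :: "real^'n \<Rightarrow> real"
    and S :: "(real^'n) set"
    and d\<^sub>o :: nat
  assumes "smooth_fun f" and "smooth_fun g" and "smooth_fun h"
    and "open S"
    and "H_immersion_on f h d\<^sub>o S"
    and "\<forall>i\<in>{1..d\<^sub>o}. \<forall>x\<in>S. \<exists>L>0. \<exists>N. open N \<and> x \<in> N \<and>
           (\<forall>xa\<in>N. \<forall>xb\<in>N.
              norm (lie_g g (lie_iter f h (i - 1)) xa - lie_g g (lie_iter f h (i - 1)) xb)
                \<le> L * H_dist f h i xa xb)"
  shows "unif_inf_observable f g h S"
  unfolding unif_inf_observable_def
proof (intro ballI allI impI)
  note sf = assms(1) and sg = assms(2) and sh = assms(3) and So = assms(4) and imm = assms(5)
    and lipA = assms(6)
  fix x v T u X V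
  assume xS: "x \<in> S" and v: "v \<noteq> 0" and T: "T > 0" and uC: "C1_on_interval u T"
    and sol: "lifted_solution f g u T x v X V"
  have X0: "X 0 = x" and V0: "V 0 = v"
    and Xd: "\<And>s. s \<in> {0..<T} \<Longrightarrow> (X has_vector_derivative (f (X s) + gmul g (X s) (u s))) (at s within {0..<T})"
    and Vd: "\<And>s. s \<in> {0..<T} \<Longrightarrow> (V has_vector_derivative
           (frechet_derivative f (at (X s)) (V s)
            + frechet_derivative (\<lambda>z. gmul g z (u s)) (at (X s)) (V s))) (at s within {0..<T})"
    using sol unfolding lifted_solution_def by auto
  have df: "\<And>y. f differentiable (at y)" using sf unfolding smooth_fun_def by (metis Ck_diff)
  have sgj: "\<And>j. smooth_fun (\<lambda>z. g z $ j)" using smooth_col[OF sg] .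
  have dgj: "\<And>j y. (\<lambda>z. g z $ j) differentiable (at y)"
    using sgj unfolding smooth_fun_def by (metis Ck_diff)
  have sL: "\<And>k. smooth_fun (lie_iter f h k)" using smooth_lie_iter[OF sf sh] .
  have dL: "\<And>k y. lie_iter f h k differentiable (at y)"
    using sL unfolding smooth_fun_def by (metis Ck_diff)
  have C2L: "\<And>k. Ck (Suc (Suc 0)) (lie_iter f h k)"
    using sL unfolding smooth_fun_def by blast
  have dB: "\<And>k j y. (\<lambda>z. lie_g g (lie_iter f h k) z $ j) differentiable (at y)"
  proof -
    fix k j y
    have "smooth_fun (lie_deriv (\<lambda>z. g z $ j) (lie_iter f h k))"
      by (rule smooth_lie[OF sgj sL])
    then show "(\<lambda>z. lie_g g (lie_iter f h k) z $ j) differentiable (at y)"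
      unfolding lie_g_comp smooth_fun_def by (metis Ck_diff)
  qed
  have "continuous (at 0 within {0..<T}) X"
    using has_vector_derivative_continuous[OF Xd] T by simp
  then have "(X \<longlongrightarrow> x) (at 0 within {0..<T})"
    using X0 by (simp add: continuous_within)
  then have "eventually (\<lambda>s. X s \<in> S) (at 0 within {0..<T})"
    using topological_tendstoD So xS by blast
  then obtain d where d: "d > 0" "\<And>s. s \<in> {0..<T} \<Longrightarrow> s \<noteq> 0 \<Longrightarrow> dist s 0 < d \<Longrightarrow> X s \<in> S"
    unfolding eventually_at by blast
  define \<tau> where "\<tau> = min d T"
  have \<tau>: "\<tau> > 0" "\<tau> \<le> T" using d T by (auto simp: \<tau>_def)
  have XS: "\<And>s. s \<in> {0..<\<tau>} \<Longrightarrow> X s \<in> S"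
  proof -
    fix s assume s: "s \<in> {0..<\<tau>}"
    show "X s \<in> S"
    proof (cases "s = 0")
      case True then show ?thesis using X0 xS by simp
    next
      case False then show ?thesis using s d by (intro d(2)) (auto simp: \<tau>_def dist_real_def)
    qed
  qed
  show "\<exists>t\<in>{0..<T}. frechet_derivative h (at (X t)) (V t) \<noteq> 0 \<and> (\<forall>s\<in>{0..t}. X s \<in> S)"
  proof (rule ccontr)
    assume H: "\<not> ?thesis"
    define w where "w k t = frechet_derivative (lie_iter f h k) (at (X t)) (V t)" for k t
    have Z0: "w 0 t = 0" if t: "t \<in> {0..<\<tau>}" for t
    proof -
      have "t \<in> {0..<T}" using t \<tau> by auto
      moreover have "\<forall>s\<in>{0..t}. X s \<in> S" using t XS by auto
      ultimately have "frechet_derivative h (at (X t)) (V t) = 0" using H by blast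
      then show ?thesis by (simp add: w_def lie_iter_def)
    qed
    have step: "w (Suc i) t = 0"
      if i: "Suc i \<le> d\<^sub>o" and t: "t \<in> {0..<\<tau>}" and IH: "\<forall>k\<le>i. w k t = 0"
         and IHi: "\<forall>s\<in>{0..<\<tau>}. w i s = 0" for i t
    proof -
      define \<phi> where "\<phi> = lie_iter f h i"
      define U where "U = u t"
      define a where "a = (\<lambda>z. f z + gmul g z U)"
      have tT: "t \<in> {0..<T}" using t \<tau> by auto
      have sub: "{0..<\<tau>} \<subseteq> {0..<T}" using \<tau> by auto
      have dgm: "\<And>y. (\<lambda>z. gmul g z U) differentiable (at y)" by (rule gmul_diff[OF dgj])
      have ad: "a differentiable (at (X t))" unfolding a_def
        using df dgm by (intro differentiable_add) auto
      have Xd': "(X has_vector_derivative a (X t)) (at t within {0..<\<tau>})"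
        using has_vector_derivative_within_subset[OF Xd[OF tT] sub] by (simp add: a_def U_def)
      have Da: "frechet_derivative a (at (X t)) (V t) =
          frechet_derivative f (at (X t)) (V t) + frechet_derivative (\<lambda>z. gmul g z U) (at (X t)) (V t)"
        unfolding a_def by (rule fd_add[OF df dgm])
      have Vd': "(V has_vector_derivative frechet_derivative a (at (X t)) (V t)) (at t within {0..<\<tau>})"
        using has_vector_derivative_within_subset[OF Vd[OF tT] sub] by (simp add: Da U_def)
      have D1: "(w i has_vector_derivative frechet_derivative (lie_deriv a \<phi>) (at (X t)) (V t)) (at t within {0..<\<tau>})"
        using chain[OF C2L ad Xd' Vd'] unfolding w_def \<phi>_def .
      have D0: "(w i has_vector_derivative 0) (at t within {0..<\<tau>})"
        by (rule has_vector_derivative_transform[where f="\<lambda>_. 0", OF t]) (use IHi in auto)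
      have zero: "frechet_derivative (lie_deriv a \<phi>) (at (X t)) (V t) = 0"
        using vector_derivative_unique_within[OF not_bot_Ico[OF t] D1 D0] .
      define B where "B j = (\<lambda>z. lie_g g \<phi> z $ j)" for j
      have lin: "linear (frechet_derivative \<phi> (at z))" for z
        using has_derivative_linear[OF fd_works[OF dL]] unfolding \<phi>_def .
      have lexp: "lie_deriv a \<phi> = (\<lambda>z. lie_iter f h (Suc i) z + (\<Sum>j\<in>UNIV. U $ j * B j z))"
      proof
        fix z
        have "lie_deriv a \<phi> z = frechet_derivative \<phi> (at z) (f z) + (\<Sum>j\<in>UNIV. U $ j * frechet_derivative \<phi> (at z) (g z $ j))"
          unfolding lie_deriv_def a_def gmul_def
          by (simp add: linear_add[OF lin] linear_sum[OF lin] linear_scale[OF lin])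
        then show "lie_deriv a \<phi> z = lie_iter f h (Suc i) z + (\<Sum>j\<in>UNIV. U $ j * B j z)"
          by (simp add: B_def lie_g_def lie_deriv_def lie_iter_def \<phi>_def)
      qed
      have dBj: "\<And>j y. B j differentiable (at y)" unfolding B_def \<phi>_def by (rule dB)
      have HD: "(lie_deriv a \<phi> has_derivative (\<lambda>w. frechet_derivative (lie_iter f h (Suc i)) (at (X t)) w
           + (\<Sum>j\<in>UNIV. U $ j * frechet_derivative (B j) (at (X t)) w))) (at (X t))"
        unfolding lexp by (intro has_derivative_add has_derivative_sum has_derivative_mult_right fd_works dL dBj)
      have "frechet_derivative (lie_deriv a \<phi>) (at (X t)) (V t) =
          w (Suc i) t + (\<Sum>j\<in>UNIV. U $ j * frechet_derivative (B j) (at (X t)) (V t))"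
        unfolding frechet_derivative_at[OF HD, symmetric] w_def by simp
      \<comment> \<open>Lipschitz condition kills the input terms\<close>
      moreover have "frechet_derivative (B j) (at (X t)) (V t) = 0" for j
      proof -
        have "Suc i \<in> {1..d\<^sub>o}" using i by simp
        moreover have "X t \<in> S" using XS t by simp
        ultimately obtain L N where LN: "open N" "X t \<in> N"
          "\<forall>xa\<in>N. \<forall>xb\<in>N. norm (lie_g g \<phi> xa - lie_g g \<phi> xb) \<le> L * H_dist f h (Suc i) xa xb"
          using lipA unfolding \<phi>_def by fastforce
        show ?thesis unfolding B_def
        proof (rule lip_zero[OF LN(1,2)])
          show "\<forall>xa\<in>N. \<forall>xb\<in>N. norm (lie_g g \<phi> xa - lie_g g \<phi> xb)
              \<le> L * sqrt (\<Sum>k<Suc i. (lie_iter f h k xa - lie_iter f h k xb)\<^sup>2)"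
            using LN(3) unfolding H_dist_def .
          show "\<forall>k<Suc i. lie_iter f h k differentiable (at (X t))" using dL by blast
          show "\<forall>k<Suc i. frechet_derivative (lie_iter f h k) (at (X t)) (V t) = 0"
            using IH unfolding w_def by auto
          show "(\<lambda>z. lie_g g \<phi> z $ j) differentiable (at (X t))" using dBj unfolding B_def .
        qed
      qed
      ultimately show ?thesis using zero by simp
    qed
    have claim: "i \<le> d\<^sub>o \<Longrightarrow> (\<forall>k<i. \<forall>t\<in>{0..<\<tau>}. w k t = 0)" for i
    proof (induction i)
      case 0 then show ?case by simp
    next
      case (Suc i)
      have IH: "\<forall>k<i. \<forall>t\<in>{0..<\<tau>}. w k t = 0" using Suc by simp
      have wi: "\<forall>t\<in>{0..<\<tau>}. w i t = 0"
      proof (cases i)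
        case 0 then show ?thesis using Z0 by simp
      next
        case (Suc i')
        show ?thesis
        proof
          fix t assume t: "t \<in> {0..<\<tau>}"
          show "w i t = 0" unfolding Suc
          proof (rule step[OF _ t])
            show "Suc i' \<le> d\<^sub>o" using Suc \<open>Suc i \<le> d\<^sub>o\<close> by simp
            show "\<forall>k\<le>i'. w k t = 0" using IH t Suc by auto
            show "\<forall>s\<in>{0..<\<tau>}. w i' s = 0" using IH Suc by auto
          qed
        qed
      qed
      show ?case using IH wi less_Suc_eq by auto
    qed
    have "0 \<in> {0..<\<tau>}" using \<tau> by simp
    then have "\<forall>k<d\<^sub>o. frechet_derivative (lie_iter f h k) (at x) v = 0"
      using claim[OF order_refl] X0 V0 unfolding w_def by force
    then have "v = 0" using imm xS unfolding H_immersion_on_def by blast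
    then show False using v by simp
  qed
qed

end
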